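(* Let $n\ge2$, $(a,b)\in\Omega_n$ and $L=L^{(n)}_{(a,b)}$. Then (i) $\mathrm{Orb}(L,\omega^a)=\mathrm{Orb}(L,1)$ if and only if $n/a$ is odd; (ii) $\mathrm{Orb}(L,\omega^bj)=\mathrm{Orb}(L,j)$ if and only if $n/b$ is odd. In particular, $L$ (which is the union of $\mathrm{Orb}(L,1),\mathrm{Orb}(L,\omega^a),\mathrm{Orb}(L,j),\mathrm{Orb}(L,\omega^bj)$) can have two, three or four orbits.
   Context: $\mathbb{H}$ is the real quaternion algebra with basis $1,i,j,k$. For $n\ge2$ let $\omega:=\cos(\pi/n)+i\sin(\pi/n)\in\mathbb{H}$ and $\mathcal{D}_n:=\langle\omega,j\rangle$ (dicyclic group of order $4n$). $\Omega_n:=\{(a,b):1\le a\le b\le n,\ a\mid n,\ b\mid n,\ \gcd(a,b)=1\}$. For $x,y$ in a group put $x\circ y:=xy^{-1}x$; $L(X)$ is the closure of a set $X$ under $\circ$; $L^{(n)}_{(a,b)}:=L(\{1,\omega^a,j,\omega^bj\})$. For $b\in L$, the orbit $\mathrm{Orb}(L,b)$ is the closure of $\{b\}$ under all maps $x\mapsto a\circ x=ax^{-1}a$ with $a\in L$. *)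

theory Defs
  imports Complex_Main
begin

text \<open>The real quaternion algebra H, with basis 1, i, j, k (Hamilton's rules
  i^2 = j^2 = k^2 = ijk = -1).\<close>

datatype quat = Quat (qRe: real) (qI: real) (qJ: real) (qK: real)

definition qmult :: "quat \<Rightarrow> quat \<Rightarrow> quat" where
  "qmult x y = Quat
     (qRe x * qRe y - qI x * qI y - qJ x * qJ y - qK x * qK y)
     (qRe x * qI y + qI x * qRe y + qJ x * qK y - qK x * qJ y)
     (qRe x * qJ y - qI x * qK y + qJ x * qRe y + qK x * qI y)
     (qRe x * qK y + qI x * qJ y - qJ x * qI y + qK x * qRe y)"

definition qnorm2 :: "quat \<Rightarrow> real" where
  "qnorm2 x = (qRe x)\<^sup>2 + (qI x)\<^sup>2 + (qJ x)\<^sup>2 + (qK x)\<^sup>2"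

definition qinv :: "quat \<Rightarrow> quat" where
  "qinv x = Quat (qRe x / qnorm2 x) (- qI x / qnorm2 x) (- qJ x / qnorm2 x) (- qK x / qnorm2 x)"

definition qone :: quat where "qone = Quat 1 0 0 0"
definition qj :: quat where "qj = Quat 0 0 1 0"

definition qpow :: "quat \<Rightarrow> nat \<Rightarrow> quat" where
  "qpow x m = (qmult x ^^ m) qone"

definition omega :: "nat \<Rightarrow> quat" where
  "omega n = Quat (cos (pi / real n)) (sin (pi / real n)) 0 0"

definition qcirc :: "quat \<Rightarrow> quat \<Rightarrow> quat" where
  "qcirc x y = qmult (qmult x (qinv y)) x"

inductive_set Lclos :: "quat set \<Rightarrow> quat set" for X :: "quat set" where
  base: "x \<in> X \<Longrightarrow> x \<in> Lclos X"
| circ: "x \<in> Lclos X \<Longrightarrow> y \<in> Lclos X \<Longrightarrow> qcirc x y \<in> Lclos X"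

inductive_set Orb :: "quat set \<Rightarrow> quat \<Rightarrow> quat set" for L :: "quat set" and b :: quat where
  self: "b \<in> Orb L b"
| step: "a \<in> L \<Longrightarrow> x \<in> Orb L b \<Longrightarrow> qcirc a x \<in> Orb L b"

definition Omega :: "nat \<Rightarrow> (nat \<times> nat) set" where
  "Omega n = {(a, b). 1 \<le> a \<and> a \<le> b \<and> b \<le> n \<and> a dvd n \<and> b dvd n \<and> gcd a b = 1}"

definition Lab :: "nat \<Rightarrow> nat \<Rightarrow> nat \<Rightarrow> quat set" where
  "Lab n a b = Lclos {qone, qpow (omega n) a, qj, qmult (qpow (omega n) b) qj}"

end

theory Submission
  imports Defs
begin

definition ang :: "nat \<Rightarrow> int \<Rightarrow> real" where
  "ang n k = real_of_int k * (pi / real n)"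

definition R :: "nat \<Rightarrow> int \<Rightarrow> quat" where
  "R n k = Quat (cos (ang n k)) (sin (ang n k)) 0 0"
definition S :: "nat \<Rightarrow> int \<Rightarrow> quat" where
  "S n k = Quat 0 0 (cos (ang n k)) (sin (ang n k))"

lemma ang_add: "ang n (p + q) = ang n p + ang n q"
  by (simp add: ang_def distrib_right add_divide_distrib)
lemma ang_diff: "ang n (p - q) = ang n p - ang n q"
  by (simp add: ang_def left_diff_distrib diff_divide_distrib)
lemma ang_minus: "ang n (- q) = - ang n q"
  by (simp add: ang_def)
lemma ang_n: "n > 0 \<Longrightarrow> ang n (int n) = pi"
  by (simp add: ang_def)

lemma RR: "qmult (R n p) (R n q) = R n (p + q)"
  by (simp add: qmult_def R_def ang_add cos_add sin_add)
lemma RS: "qmult (R n p) (S n q) = S n (p + q)"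
  by (simp add: qmult_def R_def S_def ang_add cos_add sin_add)
lemma SR: "qmult (S n p) (R n q) = S n (p - q)"
  by (simp add: qmult_def R_def S_def ang_diff cos_diff sin_diff)
lemma SS: "n > 0 \<Longrightarrow> qmult (S n p) (S n q) = R n (p - q + int n)"
  by (simp add: qmult_def R_def S_def ang_diff ang_add ang_n cos_diff sin_diff)
lemma Rinv: "qinv (R n q) = R n (- q)"
  by (simp add: qinv_def qnorm2_def R_def ang_minus)
lemma Sinv: "n > 0 \<Longrightarrow> qinv (S n q) = S n (q + int n)"
  by (simp add: qinv_def qnorm2_def S_def ang_add ang_n)


definition G :: "nat \<Rightarrow> bool \<Rightarrow> int \<Rightarrow> quat" where
  "G n t k = (if t then S n k else R n k)"

lemma circ_G: "n > 0 \<Longrightarrow>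
  qcirc (G n u p) (G n t q) = G n t (if u = t then 2 * p - q else q + int n)"
  by (cases u; cases t) (simp_all add: G_def qcirc_def RR RS SR SS Rinv Sinv algebra_simps)

lemma G_neq: "G n False k \<noteq> G n True m"
proof
  assume "G n False k = G n True m"
  then have "cos (ang n k) = 0" "sin (ang n k) = 0" by (simp_all add: G_def R_def S_def)
  then show False using sin_cos_squared_add[of "ang n k"] by simp
qed

lemma G_inj: assumes "n > 0" "G n t k = G n t m" shows "int (2 * n) dvd (k - m)"
proof -
  have "cos (ang n k) = cos (ang n m)" "sin (ang n k) = sin (ang n m)"
    using assms(2) by (cases t; simp add: G_def R_def S_def)+
  then have "cos (ang n (k - m)) = 1"
    by (simp add: ang_diff cos_diff)
  then obtain j :: int where "ang n (k - m) = of_int j * 2 * pi" using cos_one_2pi_int by blast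
  then have "real_of_int (k - m) * pi = j * 2 * pi * n" using assms(1)
    by (simp add: ang_def field_simps)
  then have "real_of_int (k - m) = real_of_int (j * 2 * int n)" by simp
  then have "k - m = j * 2 * int n" by linarith
  then show ?thesis by (simp add: dvd_def)
qed

lemma qpow_R: "qpow (omega n) k = R n (int k)"
proof (induction k)
  case 0 then show ?case by (simp add: qpow_def qone_def R_def ang_def)
next
  case (Suc k)
  have "omega n = R n 1" by (simp add: omega_def R_def ang_def)
  then have "qpow (omega n) (Suc k) = qmult (R n 1) (R n (int k))"
    using Suc by (simp add: qpow_def)
  then show ?case by (simp add: RR add.commute)
qed

lemma qone_G: "qone = G n False 0" by (simp add: G_def R_def qone_def ang_def)
lemma qj_G: "qj = G n True 0" by (simp add: G_def S_def qj_def ang_def)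
lemma pa_G: "qpow (omega n) a = G n False (int a)" by (simp add: G_def qpow_R)
lemma pb_G: "qmult (qpow (omega n) b) qj = G n True (int b)"
proof -
  have "qj = S n 0" using qj_G[of n] by (simp add: G_def)
  moreover have "qmult (R n (int b)) (S n 0) = S n (int b)" by (simp add: RS)
  ultimately show ?thesis by (simp add: G_def qpow_R)
qed


definition Dd :: "nat \<Rightarrow> nat \<Rightarrow> bool \<Rightarrow> nat" where
  "Dd a b t = (if t then b else a)"

lemma L_sub:
  assumes "n > 0" "a dvd n" "b dvd n" "x \<in> Lab n a b"
  shows "\<exists>t k. x = G n t k \<and> int (Dd a b t) dvd k"
  using assms(4) unfolding Lab_def
proof (induction rule: Lclos.induct)
  case (base x)
  then have "x = G n False 0 \<or> x = G n False (int a) \<or> x = G n True 0 \<or> x = G n True (int b)"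
    using pb_G[of n b] pa_G[of n a] qone_G[of n] qj_G[of n] by auto
  then show ?case
  proof (elim disjE)
    assume "x = G n False 0" then show ?case by (intro exI[of _ False] exI[of _ 0]) simp
  next
    assume "x = G n False (int a)" then show ?case by (intro exI[of _ False] exI[of _ "int a"]) (simp add: Dd_def)
  next
    assume "x = G n True 0" then show ?case by (intro exI[of _ True] exI[of _ 0]) simp
  next
    assume "x = G n True (int b)" then show ?case by (intro exI[of _ True] exI[of _ "int b"]) (simp add: Dd_def)
  qed
next
  case (circ x y)
  then obtain u p t q where x: "x = G n u p" "int (Dd a b u) dvd p"
    and y: "y = G n t q" "int (Dd a b t) dvd q" by blast
  have dn: "int (Dd a b t) dvd int n" using assms(2,3) by (simp add: Dd_def)
  show ?case
  proof (cases "u = t")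
    case True
    then show ?thesis using x y assms(1) by (intro exI[of _ t]) (auto simp: circ_G)
  next
    case False
    then show ?thesis using x y assms(1) dn by (intro exI[of _ t]) (auto simp: circ_G)
  qed
qed

lemma Orb_sub_L: assumes "x \<in> Lclos X" shows "Orb (Lclos X) x \<subseteq> Lclos X"
proof
  fix y assume "y \<in> Orb (Lclos X) x"
  then show "y \<in> Lclos X" by induction (auto intro: assms Lclos.circ)
qed

lemma Orb_trans: assumes "y \<in> Orb L x" shows "Orb L y \<subseteq> Orb L x"
proof
  fix z assume "z \<in> Orb L y"
  then show "z \<in> Orb L x" by induction (auto intro: assms Orb.step)
qed

lemma Orb_inv:
  assumes n: "n > 0"
    and L: "\<And>l. l \<in> L \<Longrightarrow> \<exists>u p. l = G n u p \<and> int (Dd a b u) dvd p"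
    and P0: "P k0"
    and P1: "\<And>k p. P k \<Longrightarrow> int (Dd a b t) dvd p \<Longrightarrow> P (2 * p - k)"
    and P2: "\<And>k. P k \<Longrightarrow> P (k + int n)"
    and x: "x \<in> Orb L (G n t k0)"
  shows "\<exists>k. x = G n t k \<and> P k"
  using x
proof induction
  case self then show ?case using P0 by blast
next
  case (step l x)
  then obtain u p where l: "l = G n u p" "int (Dd a b u) dvd p" using L by blast
  obtain k where k: "x = G n t k" "P k" using step by blast
  show ?case
  proof (cases "u = t")
    case True
    then show ?thesis using l k n P1 by (intro exI[of _ "2 * p - k"]) (auto simp: circ_G)
  next
    case False
    then show ?thesis using l k n P2 by (intro exI[of _ "k + int n"]) (auto simp: circ_G)
  qed
qed

lemma shift1:
  assumes n: "n > 0" and L: "G n t 0 \<in> L" "G n t d \<in> L" and x: "G n t k \<in> Orb L y"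
  shows "G n t (k + 2 * d) \<in> Orb L y" "G n t (k - 2 * d) \<in> Orb L y"
proof -
  have "qcirc (G n t d) (qcirc (G n t 0) (G n t k)) \<in> Orb L y"
    using L x by (intro Orb.step)
  then show "G n t (k + 2 * d) \<in> Orb L y" using n by (simp add: circ_G algebra_simps)
  have "qcirc (G n t 0) (qcirc (G n t d) (G n t k)) \<in> Orb L y"
    using L x by (intro Orb.step)
  then show "G n t (k - 2 * d) \<in> Orb L y" using n by (simp add: circ_G algebra_simps)
qed

lemma shift:
  assumes n: "n > 0" and L: "G n t 0 \<in> L" "G n t d \<in> L" and x: "G n t k \<in> Orb L y"
  shows "G n t (k + 2 * d * s) \<in> Orb L y"
proof (induction s rule: int_induct[where k = 0])
  case base then show ?case using x by simp
next
  case (step1 i)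
  then have "G n t (k + 2 * d * i + 2 * d) \<in> Orb L y" using shift1(1)[OF n L] by blast
  then show ?case by (simp add: algebra_simps)
next
  case (step2 i)
  then have "G n t (k + 2 * d * i - 2 * d) \<in> Orb L y" using shift1(2)[OF n L] by blast
  then show ?case by (simp add: algebra_simps)
qed

lemma flip:
  assumes n: "n > 0" and L: "G n u p \<in> L" "u \<noteq> t" and x: "G n t k \<in> Orb L y"
  shows "G n t (k + int n) \<in> Orb L y"
proof -
  have "qcirc (G n u p) (G n t k) \<in> Orb L y" using L x by (intro Orb.step)
  then show ?thesis using n L by (simp add: circ_G)
qed


lemma Lmem: "G n False 0 \<in> Lab n a b" "G n False (int a) \<in> Lab n a b"
  "G n True 0 \<in> Lab n a b" "G n True (int b) \<in> Lab n a b"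
proof -
  have "qone \<in> Lab n a b" "qpow (omega n) a \<in> Lab n a b" "qj \<in> Lab n a b"
    "qmult (qpow (omega n) b) qj \<in> Lab n a b"
    unfolding Lab_def by (rule Lclos.base; simp)+
  note h = this
  show "G n False 0 \<in> Lab n a b" "G n False (int a) \<in> Lab n a b"
    "G n True 0 \<in> Lab n a b" "G n True (int b) \<in> Lab n a b"
    using h(1) qone_G[of n] h(2) pa_G[of n a] h(3) qj_G[of n] h(4) pb_G[of n b] by metis+
qed

lemma LmemD: "G n t 0 \<in> Lab n a b" "G n t (int (Dd a b t)) \<in> Lab n a b"
  using Lmem by (cases t; simp add: Dd_def)+

lemma part12:
  fixes t :: bool
  assumes n: "n > 0" "a > 0" "b > 0" "a dvd n" "b dvd n"
  defines "L \<equiv> Lab n a b" and "d \<equiv> Dd a b t"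
  shows "Orb L (G n t (int d)) = Orb L (G n t 0) \<longleftrightarrow> odd (n div d)"
proof
  have dpos: "d > 0" "d dvd n" using n by (auto simp: d_def Dd_def)
  have L0: "G n t 0 \<in> L" and Ld: "G n t (int d) \<in> L" and Lo: "G n (\<not> t) 0 \<in> L"
    using LmemD unfolding L_def d_def by blast+
  show "odd (n div d)" if eq: "Orb L (G n t (int d)) = Orb L (G n t 0)"
  proof (rule ccontr)
    assume "\<not> odd (n div d)"
    then obtain s where s: "n div d = 2 * s" by (auto elim: evenE)
    have nn: "int n = int d * (2 * int s)" using s dpos
      by (metis dvd_mult_div_cancel of_nat_mult of_nat_numeral)
    have "G n t (int d) \<in> Orb L (G n t 0)" using eq Orb.self by metis
    have "\<exists>k. G n t (int d) = G n t k \<and> int (2 * d) dvd k"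
    proof (rule Orb_inv[where P = "\<lambda>k. int (2 * d) dvd k", OF n(1)])
      show "\<exists>u p. l = G n u p \<and> int (Dd a b u) dvd p" if "l \<in> L" for l
        using L_sub[OF n(1) n(4) n(5)] that unfolding L_def by blast
    next
      show "int (2 * d) dvd 0" by simp
    next
      fix k p :: int assume "int (2 * d) dvd k" "int (Dd a b t) dvd p"
      then show "int (2 * d) dvd 2 * p - k" unfolding d_def by (simp add: dvd_diff)
    next
      fix k :: int assume "int (2 * d) dvd k"
      moreover have "int (2 * d) dvd int n" using nn by simp
      ultimately show "int (2 * d) dvd k + int n" by (simp add: dvd_add)
    qed fact
    then obtain k where k: "G n t (int d) = G n t k" "int (2 * d) dvd k" by blast
    have "int (2 * n) dvd int d - k" using G_inj[OF n(1) k(1)] .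
    moreover have "int (2 * d) dvd int (2 * n)" using dpos by simp
    ultimately have "int (2 * d) dvd int d - k" by (rule dvd_trans[rotated])
    then have "int (2 * d) dvd int d" using k(2) by (metis dvd_add diff_add_cancel)
    then have "2 * d dvd d" by (simp only: of_nat_dvd_iff)
    then show False using dpos by (auto dest: dvd_imp_le)
  qed
  assume "odd (n div d)"
  then obtain s where s: "n div d = 2 * s + 1" by (auto elim: oddE)
  have nn: "int n = int d * (2 * int s + 1)" using s dpos
    by (metis dvd_mult_div_cancel of_nat_mult of_nat_numeral of_nat_Suc of_nat_add of_nat_1)
  have "G n t (0 + int n) \<in> Orb L (G n t 0)"
    by (rule flip[OF n(1) Lo]) (auto intro: Orb.self)
  then have "G n t (0 + int n + 2 * int d * (- int s)) \<in> Orb L (G n t 0)"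
    by (rule shift[OF n(1) L0 Ld])
  also have "0 + int n + 2 * int d * (- int s) = int d" using nn by (simp add: algebra_simps)
  finally have h1: "G n t (int d) \<in> Orb L (G n t 0)" .
  have "G n t (int d + int n) \<in> Orb L (G n t (int d))"
    by (rule flip[OF n(1) Lo]) (auto intro: Orb.self)
  then have "G n t (int d + int n + 2 * int d * (- int s - 1)) \<in> Orb L (G n t (int d))"
    by (rule shift[OF n(1) L0 Ld])
  also have "int d + int n + 2 * int d * (- int s - 1) = 0" using nn by (simp add: algebra_simps)
  finally have h2: "G n t 0 \<in> Orb L (G n t (int d))" .
  show "Orb L (G n t (int d)) = Orb L (G n t 0)"
    using Orb_trans[OF h1] Orb_trans[OF h2] by blast
qed




lemma Orb_range:
  assumes n: "n > 0" "a dvd n" "b dvd n" and x: "x \<in> Orb (Lab n a b) (G n t k0)"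
  shows "\<exists>k. x = G n t k"
proof -
  have "\<exists>k. x = G n t k \<and> True"
  proof (rule Orb_inv[where P = "\<lambda>k. True", OF n(1)])
    show "\<exists>u p. l = G n u p \<and> int (Dd a b u) dvd p" if "l \<in> Lab n a b" for l
      using L_sub[OF n(1) n(2) n(3)] that by blast
  qed (use x in auto)
  then show ?thesis by blast
qed

lemma Orb_distinct:
  assumes n: "n > 0" "a dvd n" "b dvd n"
  shows "Orb (Lab n a b) (G n False x) \<noteq> Orb (Lab n a b) (G n True y)"
proof
  assume "Orb (Lab n a b) (G n False x) = Orb (Lab n a b) (G n True y)"
  then have "G n False x \<in> Orb (Lab n a b) (G n True y)" by (metis Orb.self)
  then obtain k where "G n False x = G n True k" using Orb_range[OF n] by blast
  then show False using G_neq by blast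
qed

lemma card4: assumes "A \<noteq> C" "A \<noteq> D" "B \<noteq> C" "B \<noteq> D"
  shows "card {A, B, C, D} \<in> {2, 3, 4 :: nat}"
  using assms by (cases "A = B"; cases "C = D"; simp)

lemma cover:
  assumes n: "n > 0" "a dvd n" "b dvd n" and x: "x \<in> Lab n a b"
  shows "\<exists>t. x \<in> Orb (Lab n a b) (G n t 0) \<or> x \<in> Orb (Lab n a b) (G n t (int (Dd a b t)))"
proof -
  obtain t k where tk: "x = G n t k" "int (Dd a b t) dvd k" using L_sub[OF n x] by blast
  define d where "d = int (Dd a b t)"
  obtain m where m: "k = d * m" using tk(2) unfolding d_def by (auto elim: dvdE)
  have L0: "G n t 0 \<in> Lab n a b" and Ld: "G n t d \<in> Lab n a b" using LmemD unfolding d_def by blast+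
  show ?thesis
  proof (cases "even m")
    case True
    then obtain s where "m = 2 * s" by (auto elim: evenE)
    then have "k = 0 + 2 * d * s" using m by simp
    moreover have "G n t (0 + 2 * d * s) \<in> Orb (Lab n a b) (G n t 0)"
      by (rule shift[OF n(1) L0 Ld]) (simp add: Orb.self)
    ultimately show ?thesis using tk(1) by blast
  next
    case False
    then obtain s where "m = 2 * s + 1" by (auto elim: oddE)
    then have "k = d + 2 * d * s" using m by (simp add: algebra_simps)
    moreover have "G n t (d + 2 * d * s) \<in> Orb (Lab n a b) (G n t d)"
      by (rule shift[OF n(1) L0 Ld]) (simp add: Orb.self)
    ultimately show ?thesis using tk(1) unfolding d_def by blast
  qed
qed

theorem lemma5p6:
  fixes n a b :: nat
  assumes "n \<ge> 2" and "(a, b) \<in> Omega n"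
  defines "L \<equiv> Lab n a b"
  shows "(Orb L (qpow (omega n) a) = Orb L qone \<longleftrightarrow> odd (n div a))
    \<and> (Orb L (qmult (qpow (omega n) b) qj) = Orb L qj \<longleftrightarrow> odd (n div b))
    \<and> L = Orb L qone \<union> Orb L (qpow (omega n) a) \<union> Orb L qj \<union> Orb L (qmult (qpow (omega n) b) qj)
    \<and> card {Orb L qone, Orb L (qpow (omega n) a), Orb L qj, Orb L (qmult (qpow (omega n) b) qj)}
        \<in> {2, 3, 4}"
proof -
  have n: "n > 0" "a > 0" "b > 0" "a dvd n" "b dvd n"
    using assms(1,2) by (auto simp: Omega_def)
  have e: "qone = G n False 0" "qpow (omega n) a = G n False (int a)" "qj = G n True 0"
    "qmult (qpow (omega n) b) qj = G n True (int b)"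
    by (rule qone_G pa_G qj_G pb_G)+
  have p1: "Orb L (G n False (int a)) = Orb L (G n False 0) \<longleftrightarrow> odd (n div a)"
    using part12[OF n, of False] unfolding L_def by (simp add: Dd_def)
  have p2: "Orb L (G n True (int b)) = Orb L (G n True 0) \<longleftrightarrow> odd (n div b)"
    using part12[OF n, of True] unfolding L_def by (simp add: Dd_def)
  have LL: "L = Lclos {qone, qpow (omega n) a, qj, qmult (qpow (omega n) b) qj}"
    unfolding L_def Lab_def ..
  have sub: "Orb L y \<subseteq> L" if "y \<in> L" for y
  proof -
    have "y \<in> Lclos {qone, qpow (omega n) a, qj, qmult (qpow (omega n) b) qj}"
      using that LL by blast
    then have "Orb (Lclos {qone, qpow (omega n) a, qj, qmult (qpow (omega n) b) qj}) y
      \<subseteq> Lclos {qone, qpow (omega n) a, qj, qmult (qpow (omega n) b) qj}"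
      by (rule Orb_sub_L)
    then show ?thesis using LL by simp
  qed
  have m: "G n False 0 \<in> L" "G n False (int a) \<in> L" "G n True 0 \<in> L" "G n True (int b) \<in> L"
    unfolding L_def by (simp_all add: Lmem)
  have cov: "x \<in> Orb L (G n False 0) \<or> x \<in> Orb L (G n False (int a)) \<or> x \<in> Orb L (G n True 0)
      \<or> x \<in> Orb L (G n True (int b))" if xL: "x \<in> L" for x
  proof -
    obtain t where t: "x \<in> Orb L (G n t 0) \<or> x \<in> Orb L (G n t (int (Dd a b t)))"
      using cover[OF n(1) n(4) n(5), of x] xL unfolding L_def by blast
    show ?thesis
    proof (cases t)
      case True
      then have "Dd a b t = b" by (simp add: Dd_def)
      then show ?thesis using t True by (simp only: of_nat_0) blast
    next
      case False
      then have "Dd a b t = a" by (simp add: Dd_def)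
      then show ?thesis using t False by (simp only: of_nat_0) blast
    qed
  qed
  have p3: "L = Orb L (G n False 0) \<union> Orb L (G n False (int a)) \<union> Orb L (G n True 0)
      \<union> Orb L (G n True (int b))"
    apply (rule equalityI)
    subgoal using cov by blast
    subgoal using sub[OF m(1)] sub[OF m(2)] sub[OF m(3)] sub[OF m(4)] by (simp only: Un_subset_iff)
    done
  have p4: "card {Orb L (G n False 0), Orb L (G n False (int a)), Orb L (G n True 0),
      Orb L (G n True (int b))} \<in> {2, 3, 4}"
    by (rule card4) (use Orb_distinct[OF n(1) n(4) n(5)] in \<open>simp_all add: L_def\<close>)
  show ?thesis unfolding e(4) unfolding e(1,2,3) by (intro conjI p1 p2 p3 p4)
qed

end
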